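(* Let $\pi:L_{\mathcal F}\to L_{\mathcal G}$ satisfy (REG). For every finite partition $\Gamma$ of $\Omega$ into $\mathcal G$-measurable sets, every $X\in L_{\mathcal F}$ and $Q\in L^*_{\mathcal F}\cap\mathcal P$, the set \[\mathcal A^\Gamma_Q(X):=\{\pi^\Gamma(\xi)\mid \xi\in L_{\mathcal F},\ E_Q[\xi\mid\mathcal G]\ge_Q E_Q[X\mid\mathcal G]\}\] is downward directed; hence there exists a sequence $(\eta^Q_m)_{m\ge1}\subseteq L_{\mathcal F}$ with $E_Q[\eta^Q_m\mid\mathcal G]\ge_Q E_Q[X\mid\mathcal G]$ for all $m$ and $\pi^\Gamma(\eta^Q_m)\downarrow K^\Gamma(X,Q)$ as $m\uparrow\infty$.
   Context: Let $(\Omega,\mathcal F,\mathbb P)$ be a probability space and $\mathcal G\subseteq\mathcal F$ a sub-$\sigma$-algebra. (In)equalities hold $\mathbb P$-a.s. unless a measure is indicated ($\ge_Q$: $Q$-a.s.); $\inf$ is the $\mathbb P$-essential infimum. $L_{\mathcal F}\subseteq L^0(\Omega,\mathcal F,\mathbb P)$, $L_{\mathcal G}\subseteq L^0(\Omega,\mathcal G,\mathbb P)$ are vector lattices closed under multiplication by indicators of $\mathcal F$- (resp. $\mathcal G$-) measurable sets; the order continuous dual $L^*_{\mathcal F}$ of $(L_{\mathcal F},\ge)$ is a lattice contained in $L^1(\Omega,\mathcal F,\mathbb P)$ (functionals $X\mapsto E_{\mathbb P}[ZX]$), closed under multiplication by indicators of sets in $\mathcal F$. $\mathcal P$ = densities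 of probabilities $Q\ll\mathbb P$. (REG): $\pi(X\mathbf 1_A+Y\mathbf 1_{A^c})=\pi(X)\mathbf 1_A+\pi(Y)\mathbf 1_{A^c}$ for $A\in\mathcal G$. For $A\in\mathcal G$, $\pi_A(X):=\operatorname{ess\,sup}_{\omega\in A}\pi(X)(\omega)$; $\pi^\Gamma(X):=\sum_{A\in\Gamma}\pi_A(X)\mathbf 1_A$; $K^\Gamma(X,Q):=\inf\mathcal A^\Gamma_Q(X)$. A set of random variables is downward directed if any two elements have a common lower bound in the set. *)

theory Defs
  imports "HOL-Probability.Probability"
begin

text \<open>Random variables are represented by functions; (in)equalities between random
variables are understood almost surely.\<close>

definition ind_vector_lattice :: "'a measure \<Rightarrow> 'a set set \<Rightarrow> ('a \<Rightarrow> real) set \<Rightarrow> bool" where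
  "ind_vector_lattice M S L \<longleftrightarrow>
     L \<subseteq> measurable (measure_of (space M) S (\<lambda>_. 0)) borel \<and>
     (\<lambda>_. 0) \<in> L \<and>
     (\<forall>X\<in>L. \<forall>Y\<in>L. (\<lambda>\<omega>. X \<omega> + Y \<omega>) \<in> L) \<and>
     (\<forall>X\<in>L. \<forall>c::real. (\<lambda>\<omega>. c * X \<omega>) \<in> L) \<and>
     (\<forall>X\<in>L. \<forall>Y\<in>L. (\<lambda>\<omega>. max (X \<omega>) (Y \<omega>)) \<in> L) \<and>
     (\<forall>X\<in>L. \<forall>A\<in>S. (\<lambda>\<omega>. indicator A \<omega> * X \<omega>) \<in> L)"

definition down_directed :: "'a measure \<Rightarrow> ('a \<Rightarrow> 'b::order) set \<Rightarrow> bool" where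
  "down_directed M S \<longleftrightarrow>
     (\<forall>a\<in>S. \<forall>b\<in>S. \<exists>c\<in>S. (AE \<omega> in M. c \<omega> \<le> a \<omega>) \<and> (AE \<omega> in M. c \<omega> \<le> b \<omega>))"

text \<open>Order continuous dual of \<open>(L,\<ge>)\<close>, represented by densities Z (functional
  \<open>X \<mapsto> E[Z X]\<close>): Z is integrable, Z X is integrable for each X in L, and
  \<open>E[Z X\<^sub>\<alpha>] \<rightarrow> 0\<close> along every downward directed family in L with infimum 0 in L
  (the family viewed as a net indexed by itself).\<close>
definition order_cont_dual :: "'a measure \<Rightarrow> ('a \<Rightarrow> real) set \<Rightarrow> ('a \<Rightarrow> real) set" where
  "order_cont_dual M L = {Z. Z \<in> borel_measurable M \<and> integrable M Z \<and>
     (\<forall>X\<in>L. integrable M (\<lambda>\<omega>. Z \<omega> * X \<omega>)) \<and>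
     (\<forall>D. D \<subseteq> L \<and> D \<noteq> {} \<and> down_directed M D \<and>
          (\<forall>X\<in>D. AE \<omega> in M. 0 \<le> X \<omega>) \<and>
          (\<forall>Y\<in>L. (\<forall>X\<in>D. AE \<omega> in M. Y \<omega> \<le> X \<omega>) \<longrightarrow> (AE \<omega> in M. Y \<omega> \<le> 0))
        \<longrightarrow> (\<forall>e>0. \<exists>X0\<in>D. \<forall>X\<in>D. (AE \<omega> in M. X \<omega> \<le> X0 \<omega>) \<longrightarrow>
               \<bar>\<integral>\<omega>. Z \<omega> * X \<omega> \<partial>M\<bar> < e))}"

text \<open>Densities of probability measures absolutely continuous w.r.t. M.\<close>
definition prob_densities :: "'a measure \<Rightarrow> ('a \<Rightarrow> real) set" where
  "prob_densities M = {Z. Z \<in> borel_measurable M \<and> (\<forall>\<omega>\<in>space M. 0 \<le> Z \<omega>) \<and>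
      integrable M Z \<and> (\<integral>\<omega>. Z \<omega> \<partial>M) = 1}"

definition ess_sup_on :: "'a measure \<Rightarrow> 'a set \<Rightarrow> ('a \<Rightarrow> real) \<Rightarrow> ereal" where
  "ess_sup_on M A f = Inf {z. AE \<omega> in M. \<omega> \<in> A \<longrightarrow> ereal (f \<omega>) \<le> z}"

definition pi_Gamma :: "'a measure \<Rightarrow> 'a set set \<Rightarrow> (('a \<Rightarrow> real) \<Rightarrow> ('a \<Rightarrow> real))
    \<Rightarrow> ('a \<Rightarrow> real) \<Rightarrow> 'a \<Rightarrow> ereal" where
  "pi_Gamma M \<Gamma> \<pi> X \<omega> = (\<Sum>A\<in>\<Gamma>. if \<omega> \<in> A then ess_sup_on M A (\<pi> X) else 0)"

definition acc_set :: "'a measure \<Rightarrow> 'a measure \<Rightarrow> ('a \<Rightarrow> real) set \<Rightarrow> 'a set set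
    \<Rightarrow> (('a \<Rightarrow> real) \<Rightarrow> ('a \<Rightarrow> real)) \<Rightarrow> ('a \<Rightarrow> real) \<Rightarrow> ('a \<Rightarrow> real) \<Rightarrow> ('a \<Rightarrow> ereal) set" where
  "acc_set M G L \<Gamma> \<pi> X Q = {pi_Gamma M \<Gamma> \<pi> \<xi> | \<xi>. \<xi> \<in> L \<and>
     (AE \<omega> in density M Q. real_cond_exp (density M Q) G \<xi> \<omega> \<ge> real_cond_exp (density M Q) G X \<omega>)}"

definition is_ess_inf :: "'a measure \<Rightarrow> ('a \<Rightarrow> ereal) set \<Rightarrow> ('a \<Rightarrow> ereal) \<Rightarrow> bool" where
  "is_ess_inf M S K \<longleftrightarrow> K \<in> borel_measurable M \<and>
     (\<forall>Y\<in>S. AE \<omega> in M. K \<omega> \<le> Y \<omega>) \<and>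
     (\<forall>K'. K' \<in> borel_measurable M \<and> (\<forall>Y\<in>S. AE \<omega> in M. K' \<omega> \<le> Y \<omega>) \<longrightarrow>
        (AE \<omega> in M. K' \<omega> \<le> K \<omega>))"

end

theory Submission
  imports Defs
begin
lemma sum_cell:
  fixes h :: "'a set \<Rightarrow> ereal"
  assumes "finite \<Gamma>" "disjoint \<Gamma>" "B \<in> \<Gamma>" "\<omega> \<in> B"
  shows "(\<Sum>A\<in>\<Gamma>. if \<omega> \<in> A then h A else 0) = h B"
proof -
  have "(\<Sum>A\<in>\<Gamma>. if \<omega> \<in> A then h A else 0) = (\<Sum>A\<in>\<Gamma>. if A = B then h A else 0)"
  proof (rule sum.cong)
    fix A assume "A \<in> \<Gamma>"
    then have "\<omega> \<in> A \<longleftrightarrow> A = B" using assms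
      by (auto simp: pairwise_def disjnt_def)
    then show "(if \<omega> \<in> A then h A else 0) = (if A = B then h A else 0)" by simp
  qed simp
  also have "\<dots> = h B" using assms(1,3) by (simp add: sum.delta)
  finally show ?thesis .
qed

lemma pi_Gamma_cell:
  assumes "finite \<Gamma>" "disjoint \<Gamma>" "B \<in> \<Gamma>" "\<omega> \<in> B"
  shows "pi_Gamma M \<Gamma> \<pi> \<xi> \<omega> = ess_sup_on M B (\<pi> \<xi>)"
  unfolding pi_Gamma_def by (rule sum_cell[OF assms])

lemma ess_sup_on_cong:
  assumes "AE \<omega> in M. \<omega> \<in> B \<longrightarrow> f \<omega> = g \<omega>"
  shows "ess_sup_on M B f = ess_sup_on M B g"
proof -
  have "{z. AE \<omega> in M. \<omega> \<in> B \<longrightarrow> ereal (f \<omega>) \<le> z} = {z. AE \<omega> in M. \<omega> \<in> B \<longrightarrow> ereal (g \<omega>) \<le> z}"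
  proof (intro Collect_cong iffI)
    fix z assume "AE \<omega> in M. \<omega> \<in> B \<longrightarrow> ereal (f \<omega>) \<le> z"
    with assms show "AE \<omega> in M. \<omega> \<in> B \<longrightarrow> ereal (g \<omega>) \<le> z" by eventually_elim auto
  next
    fix z assume "AE \<omega> in M. \<omega> \<in> B \<longrightarrow> ereal (g \<omega>) \<le> z"
    with assms show "AE \<omega> in M. \<omega> \<in> B \<longrightarrow> ereal (f \<omega>) \<le> z" by eventually_elim auto
  qed
  then show ?thesis unfolding ess_sup_on_def by simp
qed

lemma ce_comb:
  assumes "sigma_finite_subalgebra N G" "A \<in> sets G" "integrable N f1" "integrable N f2"
  shows "AE x in N. real_cond_exp N G (\<lambda>\<omega>. f2 \<omega> + indicator A \<omega> * (f1 \<omega> + (-1) * f2 \<omega>)) x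
     = (if x \<in> A then real_cond_exp N G f1 x else real_cond_exp N G f2 x)"
proof -
  interpret sigma_finite_subalgebra N G by fact
  have AN: "A \<in> sets N" using subalg assms(2) by (auto simp: subalgebra_def)
  have i3: "integrable N (\<lambda>\<omega>. (-1) * f2 \<omega>)" using assms(4) by simp
  have ig: "integrable N (\<lambda>\<omega>. f1 \<omega> + (-1) * f2 \<omega>)" using assms(3) i3 by (rule Bochner_Integration.integrable_add)
  have i4: "integrable N (\<lambda>\<omega>. indicator A \<omega> * (f1 \<omega> + (-1) * f2 \<omega>))"
    using integrable_mult_indicator[OF AN ig] by simp
  have e1: "AE x in N. real_cond_exp N G (\<lambda>\<omega>. f2 \<omega> + indicator A \<omega> * (f1 \<omega> + (-1) * f2 \<omega>)) x
     = real_cond_exp N G f2 x + real_cond_exp N G (\<lambda>\<omega>. indicator A \<omega> * (f1 \<omega> + (-1) * f2 \<omega>)) x"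
    by (rule real_cond_exp_add[OF assms(4) i4])
  have e2: "AE x in N. real_cond_exp N G (\<lambda>\<omega>. indicator A \<omega> * (f1 \<omega> + (-1) * f2 \<omega>)) x
      = indicator A x * real_cond_exp N G (\<lambda>\<omega>. f1 \<omega> + (-1) * f2 \<omega>) x"
    by (rule real_cond_exp_mult) (use assms(2) ig i4 in auto)
  have e3: "AE x in N. real_cond_exp N G (\<lambda>\<omega>. f1 \<omega> + (-1) * f2 \<omega>) x
      = real_cond_exp N G f1 x + real_cond_exp N G (\<lambda>\<omega>. (-1) * f2 \<omega>) x"
    by (rule real_cond_exp_add[OF assms(3) i3])
  have e4: "AE x in N. real_cond_exp N G (\<lambda>\<omega>. (-1) * f2 \<omega>) x = (-1) * real_cond_exp N G f2 x"
    by (rule real_cond_exp_cmult[OF assms(4)])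
  show ?thesis using e1 e2 e3 e4 by eventually_elim (auto simp: indicator_def)
qed
theorem lemma30:
  fixes M G :: "'a measure"
    and LF LG :: "('a \<Rightarrow> real) set"
    and \<pi> :: "('a \<Rightarrow> real) \<Rightarrow> ('a \<Rightarrow> real)"
    and \<Gamma> :: "'a set set"
    and X Q :: "'a \<Rightarrow> real"
  assumes "prob_space M"
    and "subalgebra M G"
    and "ind_vector_lattice M (sets M) LF"
    and "ind_vector_lattice M (sets G) LG"
    and "\<forall>Y\<in>LF. \<pi> Y \<in> LG"
    and "\<forall>Y\<in>LF. \<forall>Z\<in>LF. (AE \<omega> in M. Y \<omega> = Z \<omega>) \<longrightarrow> (AE \<omega> in M. \<pi> Y \<omega> = \<pi> Z \<omega>)"
    and REG: "\<forall>Y\<in>LF. \<forall>Z\<in>LF. \<forall>A\<in>sets G.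
       AE \<omega> in M. \<pi> (\<lambda>\<omega>'. if \<omega>' \<in> A then Y \<omega>' else Z \<omega>') \<omega> = (if \<omega> \<in> A then \<pi> Y \<omega> else \<pi> Z \<omega>)"
    and "finite \<Gamma>" "\<Gamma> \<subseteq> sets G" "disjoint \<Gamma>" "\<Union>\<Gamma> = space M" "{} \<notin> \<Gamma>"
    and "X \<in> LF"
    and "Q \<in> order_cont_dual M LF \<inter> prob_densities M"
  shows "down_directed M (acc_set M G LF \<Gamma> \<pi> X Q) \<and>
    (\<exists>\<eta> :: nat \<Rightarrow> ('a \<Rightarrow> real). \<exists>K.
       is_ess_inf M (acc_set M G LF \<Gamma> \<pi> X Q) K \<and>
       (\<forall>m. \<eta> m \<in> LF \<and> (AE \<omega> in density M Q.
           real_cond_exp (density M Q) G (\<eta> m) \<omega> \<ge> real_cond_exp (density M Q) G X \<omega>)) \<and>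
       (AE \<omega> in M. antimono (\<lambda>m. pi_Gamma M \<Gamma> \<pi> (\<eta> m) \<omega>) \<and>
                    (\<lambda>m. pi_Gamma M \<Gamma> \<pi> (\<eta> m) \<omega>) \<longlonglongrightarrow> K \<omega>))"
proof -
  let ?N = "density M (\<lambda>x. ennreal (Q x))"
  note ivl = assms(3)[unfolded ind_vector_lattice_def]
  have ivl_meas: "LF \<subseteq> measurable (measure_of (space M) (sets M) (\<lambda>_. 0)) borel"
    and cl_add: "\<And>Y Z. Y \<in> LF \<Longrightarrow> Z \<in> LF \<Longrightarrow> (\<lambda>\<omega>. Y \<omega> + Z \<omega>) \<in> LF"
    and cl_mul: "\<And>Y c. Y \<in> LF \<Longrightarrow> (\<lambda>\<omega>. c * Y \<omega>) \<in> LF"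
    and cl_ind: "\<And>Y A. Y \<in> LF \<Longrightarrow> A \<in> sets M \<Longrightarrow> (\<lambda>\<omega>. indicator A \<omega> * Y \<omega>) \<in> LF"
    using ivl by simp_all
  have sub: "subalgebra M G" by fact
  interpret P: prob_space M by fact
  have Qm: "Q \<in> borel_measurable M" and Qpos: "\<forall>\<omega>\<in>space M. 0 \<le> Q \<omega>" and Qint: "integrable M Q"
    and Q1: "(\<integral>\<omega>. Q \<omega> \<partial>M) = 1" and Qd: "\<forall>Y\<in>LF. integrable M (\<lambda>\<omega>. Q \<omega> * Y \<omega>)"
    using assms(14) by (auto simp: prob_densities_def order_cont_dual_def)
  have GM: "sets G \<subseteq> sets M" using sub by (auto simp: subalgebra_def)
  have measLF: "Y \<in> borel_measurable M" if "Y \<in> LF" for Y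
  proof -
    have "Y \<in> measurable (measure_of (space M) (sets M) (\<lambda>_. 0)) borel" using ivl_meas that by auto
    moreover have "sets (measure_of (space M) (sets M) (\<lambda>_. 0)) = sets M" by (rule sets.sets_measure_of_eq)
    ultimately show ?thesis using measurable_cong_sets[of _ M borel borel] by metis
  qed
  have intN: "integrable ?N Y" if "Y \<in> LF" for Y
    using integrable_density[OF measLF[OF that] Qm] Qpos Qd that by (auto intro: AE_I2)
  have finN: "finite_measure ?N"
  proof (rule finite_measureI)
    have "emeasure ?N (space ?N) = (\<integral>\<^sup>+x. ennreal (Q x) * indicator (space M) x \<partial>M)"
      using Qm by (simp add: emeasure_density)
    also have "\<dots> = (\<integral>\<^sup>+x. ennreal (Q x) \<partial>M)"
      by (rule nn_integral_cong) (simp add: indicator_def)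
    also have "\<dots> = ennreal (\<integral>\<omega>. Q \<omega> \<partial>M)"
      by (rule nn_integral_eq_integral[OF Qint]) (use Qpos in \<open>auto intro: AE_I2\<close>)
    finally show "emeasure ?N (space ?N) \<noteq> \<infinity>" by simp
  qed
  have sfs: "sigma_finite_subalgebra ?N G"
  proof (rule finite_measure_subalgebra_is_sigma_finite)
    show "finite_measure_subalgebra ?N G"
      unfolding finite_measure_subalgebra_def finite_measure_subalgebra_axioms_def
      using finN sub by (auto simp: subalgebra_def)
  qed
  define adm where "adm \<xi> \<longleftrightarrow> \<xi> \<in> LF \<and> (AE \<omega> in ?N. real_cond_exp ?N G \<xi> \<omega> \<ge> real_cond_exp ?N G X \<omega>)" for \<xi>
  define v where "v B \<xi> = ess_sup_on M B (\<pi> \<xi>)" for B \<xi>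
  have admX: "adm X" using assms(13) by (auto simp: adm_def intro: AE_I2)
  have cell: "pi_Gamma M \<Gamma> \<pi> \<xi> \<omega> = v B \<xi>" if "B \<in> \<Gamma>" "\<omega> \<in> B" for B \<omega> \<xi>
    unfolding v_def by (rule pi_Gamma_cell[OF assms(8) assms(10) that])
  have incell: "\<exists>B\<in>\<Gamma>. \<omega> \<in> B" if "\<omega> \<in> space M" for \<omega>
    using that assms(11) by auto
  have comb2: "\<exists>\<xi>. adm \<xi> \<and> (\<forall>B\<in>\<Gamma>. v B \<xi> \<le> v B \<xi>1 \<and> v B \<xi> \<le> v B \<xi>2)"
    if a1: "adm \<xi>1" and a2: "adm \<xi>2" for \<xi>1 \<xi>2
  proof -
    define A where "A = \<Union>{B\<in>\<Gamma>. v B \<xi>1 \<le> v B \<xi>2}"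
    have AG: "A \<in> sets G" unfolding A_def
      using assms(8,9) by (intro sets.finite_Union) auto
    have AM: "A \<in> sets M" using AG GM by auto
    have L1: "\<xi>1 \<in> LF" and L2: "\<xi>2 \<in> LF" using a1 a2 by (auto simp: adm_def)
    define \<xi> where "\<xi> = (\<lambda>\<omega>. \<xi>2 \<omega> + indicator A \<omega> * (\<xi>1 \<omega> + (-1) * \<xi>2 \<omega>))"
    have "(\<lambda>\<omega>. (-1) * \<xi>2 \<omega>) \<in> LF" by (rule cl_mul[OF L2])
    then have "(\<lambda>\<omega>. \<xi>1 \<omega> + (-1) * \<xi>2 \<omega>) \<in> LF" by (rule cl_add[OF L1])
    then have "(\<lambda>\<omega>. indicator A \<omega> * (\<xi>1 \<omega> + (-1) * \<xi>2 \<omega>)) \<in> LF" using AM by (rule cl_ind)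
    then have xiL: "\<xi> \<in> LF" unfolding \<xi>_def by (rule cl_add[OF L2])
    have xiif: "\<xi> = (\<lambda>\<omega>'. if \<omega>' \<in> A then \<xi>1 \<omega>' else \<xi>2 \<omega>')"
      unfolding \<xi>_def by (auto simp: indicator_def)
    have reg: "AE \<omega> in M. \<pi> \<xi> \<omega> = (if \<omega> \<in> A then \<pi> \<xi>1 \<omega> else \<pi> \<xi>2 \<omega>)"
      using REG L1 L2 AG unfolding xiif by blast
    have ce: "AE \<omega> in ?N. real_cond_exp ?N G \<xi> \<omega> = (if \<omega> \<in> A then real_cond_exp ?N G \<xi>1 \<omega> else real_cond_exp ?N G \<xi>2 \<omega>)"
      unfolding \<xi>_def by (rule ce_comb[OF sfs AG intN[OF L1] intN[OF L2]])
    have c1: "AE \<omega> in ?N. real_cond_exp ?N G \<xi>1 \<omega> \<ge> real_cond_exp ?N G X \<omega>"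
      and c2: "AE \<omega> in ?N. real_cond_exp ?N G \<xi>2 \<omega> \<ge> real_cond_exp ?N G X \<omega>"
      using a1 a2 unfolding adm_def by auto
    have "AE \<omega> in ?N. real_cond_exp ?N G \<xi> \<omega> \<ge> real_cond_exp ?N G X \<omega>"
      using ce c1 c2 by eventually_elim auto
    then have adm: "adm \<xi>" using xiL unfolding adm_def by blast
    have "v B \<xi> \<le> v B \<xi>1 \<and> v B \<xi> \<le> v B \<xi>2" if B: "B \<in> \<Gamma>" for B
    proof (cases "v B \<xi>1 \<le> v B \<xi>2")
      case True
      then have "B \<subseteq> A" using B unfolding A_def by auto
      then have "AE \<omega> in M. \<omega> \<in> B \<longrightarrow> \<pi> \<xi> \<omega> = \<pi> \<xi>1 \<omega>" using reg by (auto elim!: eventually_mono)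
      then have "v B \<xi> = v B \<xi>1" unfolding v_def by (rule ess_sup_on_cong)
      then show ?thesis using True by simp
    next
      case False
      have "B \<inter> A = {}"
      proof -
        { fix B' assume "B' \<in> \<Gamma>" "v B' \<xi>1 \<le> v B' \<xi>2"
          then have "B' \<noteq> B" using False by auto
          then have "B \<inter> B' = {}" using assms(10) B \<open>B' \<in> \<Gamma>\<close> by (auto simp: pairwise_def disjnt_def) }
        then show ?thesis unfolding A_def by blast
      qed
      then have "AE \<omega> in M. \<omega> \<in> B \<longrightarrow> \<pi> \<xi> \<omega> = \<pi> \<xi>2 \<omega>" using reg by (auto elim!: eventually_mono)
      then have "v B \<xi> = v B \<xi>2" unfolding v_def by (rule ess_sup_on_cong)
      then show ?thesis using False by simp
    qed
    then show ?thesis using adm by blast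
  qed
  have combF: "\<exists>\<xi>. adm \<xi> \<and> (\<forall>B\<in>\<Gamma>. \<forall>\<zeta>\<in>F. v B \<xi> \<le> v B \<zeta>)"
    if "finite F" "F \<noteq> {}" "\<forall>\<zeta>\<in>F. adm \<zeta>" for F
    using that
  proof (induction F rule: finite_ne_induct)
    case (singleton x)
    then show ?case by auto
  next
    case (insert x F)
    then obtain \<xi> where "adm \<xi>" "\<forall>B\<in>\<Gamma>. \<forall>\<zeta>\<in>F. v B \<xi> \<le> v B \<zeta>" by auto
    moreover obtain \<xi>' where "adm \<xi>'" "\<forall>B\<in>\<Gamma>. v B \<xi>' \<le> v B \<xi> \<and> v B \<xi>' \<le> v B x"
      using comb2[OF \<open>adm \<xi>\<close>, of x] insert.prems by blast
    ultimately show ?case by (intro exI[of _ \<xi>']) (blast intro: order_trans)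
  qed
  have acc: "acc_set M G LF \<Gamma> \<pi> X Q = (\<lambda>\<xi>. pi_Gamma M \<Gamma> \<pi> \<xi>) ` {\<xi>. adm \<xi>}"
    unfolding acc_set_def adm_def by auto
  have part1: "down_directed M (acc_set M G LF \<Gamma> \<pi> X Q)"
    unfolding down_directed_def acc
  proof (clarsimp)
    fix \<xi>1 \<xi>2 assume "adm \<xi>1" "adm \<xi>2"
    then obtain \<xi> where x: "adm \<xi>" "\<forall>B\<in>\<Gamma>. v B \<xi> \<le> v B \<xi>1 \<and> v B \<xi> \<le> v B \<xi>2"
      using comb2 by blast
    have "\<forall>\<omega>\<in>space M. pi_Gamma M \<Gamma> \<pi> \<xi> \<omega> \<le> pi_Gamma M \<Gamma> \<pi> \<xi>1 \<omega> \<and> pi_Gamma M \<Gamma> \<pi> \<xi> \<omega> \<le> pi_Gamma M \<Gamma> \<pi> \<xi>2 \<omega>"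
      using x(2) incell cell by metis
    then show "\<exists>\<xi>. adm \<xi> \<and> (AE \<omega> in M. pi_Gamma M \<Gamma> \<pi> \<xi> \<omega> \<le> pi_Gamma M \<Gamma> \<pi> \<xi>1 \<omega>) \<and>
                  (AE \<omega> in M. pi_Gamma M \<Gamma> \<pi> \<xi> \<omega> \<le> pi_Gamma M \<Gamma> \<pi> \<xi>2 \<omega>)"
      using x(1) by (intro exI[of _ \<xi>]) (auto intro: AE_I2)
  qed

  define V where "V B = (\<lambda>\<xi>. v B \<xi>) ` {\<xi>. adm \<xi>}" for B
  define k where "k B = Inf (V B)" for B
  have Vne: "V B \<noteq> {}" for B using admX unfolding V_def by auto
  have "\<forall>B. \<exists>f::nat \<Rightarrow> ereal. decseq f \<and> range f \<subseteq> V B \<and> Inf (V B) = (INF i. f i)"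
    using Inf_countable_INF[OF Vne] by blast
  from choice[OF this] obtain f where f0: "\<forall>B. decseq (f B) \<and> range (f B) \<subseteq> V B \<and> Inf (V B) = (INF i. f B i)"
    by blast
  have f: "\<And>B. decseq (f B)" "\<And>B. range (f B) \<subseteq> V B" "\<And>B. k B = (INF i. f B i)"
    using f0 unfolding k_def by auto
  have "\<forall>m. \<exists>h. \<forall>B. adm (h B) \<and> v B (h B) = f B m"
  proof
    fix m
    have "\<forall>B. \<exists>\<xi>. adm \<xi> \<and> v B \<xi> = f B m"
    proof
      fix B
      have "f B m \<in> V B" using f(2) by blast
      then show "\<exists>\<xi>. adm \<xi> \<and> v B \<xi> = f B m" unfolding V_def by auto
    qed
    from choice[OF this] show "\<exists>h. \<forall>B. adm (h B) \<and> v B (h B) = f B m" .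
  qed
  from choice[OF this] obtain g where g0: "\<forall>m B. adm (g m B) \<and> v B (g m B) = f B m" by blast
  have g: "\<And>m B. adm (g m B)" "\<And>m B. v B (g m B) = f B m" using g0 by auto
  have flim: "(\<lambda>m. f B m) \<longlonglongrightarrow> k B" for B
    unfolding f(3) by (rule LIMSEQ_INF[OF f(1)])
  have klow: "k B \<le> v B \<xi>" if "adm \<xi>" for B \<xi>
    unfolding k_def V_def using that by (auto intro: Inf_lower)
  define S where "S m e = (SOME \<xi>. adm \<xi> \<and> (\<forall>B\<in>\<Gamma>. v B \<xi> \<le> v B e \<and> v B \<xi> \<le> f B m))" for m e
  have Sprop: "adm (S m e) \<and> (\<forall>B\<in>\<Gamma>. v B (S m e) \<le> v B e \<and> v B (S m e) \<le> f B m)" if "adm e" for m e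
  proof -
    have "\<exists>\<xi>. adm \<xi> \<and> (\<forall>B\<in>\<Gamma>. \<forall>\<zeta>\<in>insert e ((\<lambda>B. g m B) ` \<Gamma>). v B \<xi> \<le> v B \<zeta>)"
      using assms(8) that g(1) by (intro combF) auto
    then obtain \<xi> where "adm \<xi>" "\<forall>B\<in>\<Gamma>. \<forall>\<zeta>\<in>insert e ((\<lambda>B. g m B) ` \<Gamma>). v B \<xi> \<le> v B \<zeta>" by blast
    note xx = this
    have "adm \<xi> \<and> (\<forall>B\<in>\<Gamma>. v B \<xi> \<le> v B e \<and> v B \<xi> \<le> f B m)"
    proof (intro conjI ballI)
      fix B assume B: "B \<in> \<Gamma>"
      show "v B \<xi> \<le> v B e" using xx(2) B by blast
      have "g m B \<in> insert e ((\<lambda>B. g m B) ` \<Gamma>)" using B by blast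
      then have "v B \<xi> \<le> v B (g m B)" using xx(2) B by blast
      then show "v B \<xi> \<le> f B m" using g(2) by simp
    qed (rule xx(1))
    then show ?thesis unfolding S_def
      by (rule someI[of "\<lambda>\<xi>. adm \<xi> \<and> (\<forall>B\<in>\<Gamma>. v B \<xi> \<le> v B e \<and> v B \<xi> \<le> f B m)"])
  qed
  define \<eta> where "\<eta> = rec_nat X (\<lambda>m e. S (Suc m) e)"
  have eta0: "\<eta> 0 = X" and etaS: "\<eta> (Suc m) = S (Suc m) (\<eta> m)" for m
    unfolding \<eta>_def by simp_all
  have adm_eta: "adm (\<eta> m)" for m
    by (induction m) (use admX Sprop in \<open>auto simp: eta0 etaS\<close>)
  have eta_dec: "v B (\<eta> (Suc m)) \<le> v B (\<eta> m)" and eta_f: "v B (\<eta> (Suc m)) \<le> f B (Suc m)"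
    if "B \<in> \<Gamma>" for B m
    using Sprop[OF adm_eta[of m], of "Suc m"] that by (auto simp: etaS)
  have vlim: "(\<lambda>m. v B (\<eta> m)) \<longlonglongrightarrow> k B" if B: "B \<in> \<Gamma>" for B
  proof -
    have "(\<lambda>m. f B (Suc m)) \<longlonglongrightarrow> k B" using flim[of B] by (rule LIMSEQ_Suc)
    then have "(\<lambda>m. v B (\<eta> (Suc m))) \<longlonglongrightarrow> k B"
      by (rule tendsto_sandwich[rotated 2, OF tendsto_const])
         (use klow adm_eta eta_f B in auto)
    then show ?thesis by (rule LIMSEQ_imp_Suc)
  qed
  define K where "K \<omega> = (\<Sum>B\<in>\<Gamma>. if \<omega> \<in> B then k B else 0)" for \<omega>
  have Kcell: "K \<omega> = k B" if "B \<in> \<Gamma>" "\<omega> \<in> B" for B \<omega>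
    unfolding K_def by (rule sum_cell[OF assms(8) assms(10) that])
  have conv: "\<forall>\<omega>\<in>space M. antimono (\<lambda>m. pi_Gamma M \<Gamma> \<pi> (\<eta> m) \<omega>) \<and>
                    (\<lambda>m. pi_Gamma M \<Gamma> \<pi> (\<eta> m) \<omega>) \<longlonglongrightarrow> K \<omega>"
  proof
    fix \<omega> assume "\<omega> \<in> space M"
    then obtain B where B: "B \<in> \<Gamma>" "\<omega> \<in> B" using incell by blast
    have "antimono (\<lambda>m. v B (\<eta> m))" using eta_dec[OF B(1)] by (intro decseq_SucI) auto
    then show "antimono (\<lambda>m. pi_Gamma M \<Gamma> \<pi> (\<eta> m) \<omega>) \<and> (\<lambda>m. pi_Gamma M \<Gamma> \<pi> (\<eta> m) \<omega>) \<longlonglongrightarrow> K \<omega>"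
      using vlim[OF B(1)] by (simp add: cell[OF B] Kcell[OF B])
  qed
  have Kmeas: "K \<in> borel_measurable M"
  proof -
    have "(\<lambda>\<omega>. if \<omega> \<in> B then k B else 0) \<in> borel_measurable M" if "B \<in> \<Gamma>" for B
      using that assms(9) GM by (intro measurable_If_set) auto
    then show ?thesis unfolding K_def by (intro borel_measurable_ereal_sum)
  qed
  have ess: "is_ess_inf M (acc_set M G LF \<Gamma> \<pi> X Q) K"
    unfolding is_ess_inf_def acc
  proof (intro conjI Kmeas ballI allI impI)
    fix Y assume "Y \<in> (\<lambda>\<xi>. pi_Gamma M \<Gamma> \<pi> \<xi>) ` {\<xi>. adm \<xi>}"
    then obtain \<xi> where "adm \<xi>" "Y = pi_Gamma M \<Gamma> \<pi> \<xi>" by auto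
    note Yx = this
    show "AE \<omega> in M. K \<omega> \<le> Y \<omega>"
    proof (rule AE_I2)
      fix \<omega> assume "\<omega> \<in> space M"
      then obtain B where B: "B \<in> \<Gamma>" "\<omega> \<in> B" using incell by blast
      show "K \<omega> \<le> Y \<omega>" using cell[OF B] Kcell[OF B] klow[OF Yx(1)] Yx(2) by simp
    qed
  next
    fix K' assume K': "K' \<in> borel_measurable M \<and> (\<forall>Y\<in>(\<lambda>\<xi>. pi_Gamma M \<Gamma> \<pi> \<xi>) ` {\<xi>. adm \<xi>}. AE \<omega> in M. K' \<omega> \<le> Y \<omega>)"
    then have "\<forall>m. AE \<omega> in M. K' \<omega> \<le> pi_Gamma M \<Gamma> \<pi> (\<eta> m) \<omega>" using adm_eta by auto
    then have "AE \<omega> in M. \<forall>m. K' \<omega> \<le> pi_Gamma M \<Gamma> \<pi> (\<eta> m) \<omega>" by (simp add: AE_all_countable)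
    then show "AE \<omega> in M. K' \<omega> \<le> K \<omega>"
    proof (rule AE_mp, intro AE_I2 impI)
      fix \<omega> assume "\<omega> \<in> space M" "\<forall>m. K' \<omega> \<le> pi_Gamma M \<Gamma> \<pi> (\<eta> m) \<omega>"
      then show "K' \<omega> \<le> K \<omega>" using conv by (auto intro: LIMSEQ_le_const)
    qed
  qed
  have etaP: "\<forall>m. \<eta> m \<in> LF \<and> (AE \<omega> in ?N.
           real_cond_exp ?N G (\<eta> m) \<omega> \<ge> real_cond_exp ?N G X \<omega>)"
    using adm_eta unfolding adm_def by blast
  have convAE: "AE \<omega> in M. antimono (\<lambda>m. pi_Gamma M \<Gamma> \<pi> (\<eta> m) \<omega>) \<and>
                    (\<lambda>m. pi_Gamma M \<Gamma> \<pi> (\<eta> m) \<omega>) \<longlonglongrightarrow> K \<omega>"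
    using conv by (rule AE_I2[OF bspec])
  show ?thesis
    using part1 ess etaP convAE by blast
qed
end
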